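(* For every $m \in \mathbb{N}$, the $m$-uniform hypergraph $\mathcal{H}_m = (V, \mathcal{E}_s \cup \mathcal{E}_p)$ defined below admits no polychromatic coloring with $2$ colors, i.e., for every coloring $\phi\colon V \to \{\text{red},\text{blue}\}$ some hyperedge of $\mathcal{H}_m$ is monochromatic.
   Context: Construction of $\mathcal{H}_m$: first a rooted forest $F_m$ with $m^m$ trees is built, whose vertices are partitioned into "stages"; each stage $S$ carries a total order $<_S$, and all vertices of a stage have the same distance $j$ (the level of $S$) to the root of their tree; a stage on level $j \in \{0,\dots,m-1\}$ has $m^{m-j}$ vertices. Start with $m^m$ roots, which form the unique stage on level $0$, ordered in an arbitrary fixed way. Then, for every already defined stage $S$ on level $j < m-1$ and every subset $S' \subseteq S$ with $|S'| = m^{m-j-1}$, add a new stage $T(S')$ on level $j+1$ consisting of $m^{m-j-1}$ new vertices such that every vertex of $S'$ gets exactly one child from $T(S')$, and order $T(S')$ by $<_{T(S')}$ as their parents are ordered by $<_S$. The hypergraph $\mathcal{H}_m$ has vertex set $V = V(F_m)$ and two kinds of hyperedges: stage-hyperedges $\mathcal{E}_s$, namely for every stage $S$ each set of $m$ consecutive vertices in $<_S$; and path-hyperedges $\mathcal{E}_p$, namely the vertex set of every root-to-leaf path in $F_m$ (leaves are on level $m-1$). A $2$-coloring is polychromatic if every hyperedge contains vertices of both colors. *)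

theory Defs
  imports Main
begin

text \<open>
  A stage on level j is encoded by the list
  As = [A_0, ..., A_(j-1)] of subset choices made along the way: the root stage
  (level 0) is the empty list, and the stage T(S') obtained from stage As by
  choosing the subset S' is As @ [A], where A is the set of positions (w.r.t. the
  order of stage As) of the vertices of S'.  Positions in a stage on level j are
  0 ..< m^(m-j), and the order of a stage is the natural order of positions.
  A vertex is a pair (As, i): the i-th vertex of stage As.  The i-th vertex of
  T(S') is the child of the i-th element of S' (in the order of the parent stage).
\<close>

type_synonym vertex = "nat set list \<times> nat"

definition is_stage :: "nat \<Rightarrow> nat set list \<Rightarrow> bool" where
  "is_stage m As \<longleftrightarrow> length As \<le> m - 1 \<and>
     (\<forall>k < length As. As ! k \<subseteq> {..< m ^ (m - k)} \<and> card (As ! k) = m ^ (m - k - 1))"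

definition level :: "vertex \<Rightarrow> nat" where
  "level v = length (fst v)"

definition vertices :: "nat \<Rightarrow> vertex set" where
  "vertices m = {(As, i). is_stage m As \<and> i < m ^ (m - length As)}"

definition parent :: "vertex \<Rightarrow> vertex" where
  "parent v = (butlast (fst v), sorted_list_of_set (last (fst v)) ! snd v)"

definition stage_edges :: "nat \<Rightarrow> vertex set set" where
  "stage_edges m = {{(As, s + t) | t. t < m} | As s. is_stage m As \<and> s + m \<le> m ^ (m - length As)}"

definition path_edges :: "nat \<Rightarrow> vertex set set" where
  "path_edges m = {{(parent ^^ k) v | k. k \<le> m - 1} | v. v \<in> vertices m \<and> level v = m - 1}"

definition hyperedges :: "nat \<Rightarrow> vertex set set" where
  "hyperedges m = stage_edges m \<union> path_edges m"

datatype color = Red | Blue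

definition polychromatic :: "nat \<Rightarrow> (vertex \<Rightarrow> color) \<Rightarrow> bool" where
  "polychromatic m \<phi> \<longleftrightarrow> (\<forall>e \<in> hyperedges m. (\<exists>x \<in> e. \<phi> x = Red) \<and> (\<exists>x \<in> e. \<phi> x = Blue))"

end

theory Submission
  imports Defs
begin

definition good :: "nat \<Rightarrow> (vertex \<Rightarrow> color) \<Rightarrow> nat set list \<Rightarrow> bool" where
  "good m \<phi> As \<longleftrightarrow> (\<forall>i < m ^ (m - length As). \<forall>k. 1 \<le> k \<and> k \<le> length As \<longrightarrow>
      \<phi> ((parent ^^ k) (As, i)) = Red)"

lemma count_blocks:
  fixes P :: "nat \<Rightarrow> bool"
  assumes "\<forall>k<n. \<exists>t<m. P (k*m+t)"
  shows "n \<le> card {i. i < m*n \<and> P i}"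
proof -
  obtain f where f: "\<forall>k<n. f k < m \<and> P (k*m + f k)"
    using assms by metis
  define g where "g k = k*m + f k" for k
  have inj: "inj_on g {..<n}"
  proof (rule inj_onI)
    fix a b assume a: "a \<in> {..<n}" and b: "b \<in> {..<n}" and e: "g a = g b"
    have fa: "f a < m" "f b < m" using f a b by auto
    then have m0: "m \<noteq> 0" by auto
    have "g a div m = a" using fa m0 unfolding g_def by (simp add: add.commute)
    moreover have "g b div m = b" using fa m0 unfolding g_def by (simp add: add.commute)
    ultimately show "a = b" using e by metis
  qed
  have sub: "g ` {..<n} \<subseteq> {i. i < m*n \<and> P i}"
  proof
    fix x assume "x \<in> g ` {..<n}"
    then obtain k where k: "k < n" "x = g k" by auto
    have "k*m + f k < k*m + m" using f k by simp
    also have "\<dots> = (k+1)*m" by simp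
    also have "\<dots> \<le> n*m" using k by (intro mult_right_mono) auto
    finally show "x \<in> {i. i < m*n \<and> P i}" using f k unfolding g_def by (simp add: mult.commute)
  qed
  have "n = card (g ` {..<n})" using inj by (simp add: card_image)
  also have "\<dots> \<le> card {i. i < m*n \<and> P i}" by (rule card_mono[OF _ sub]) auto
  finally show ?thesis .
qed

lemma step:
  assumes m: "m \<ge> 1"
    and poly: "\<forall>e\<in>stage_edges m. \<exists>x\<in>e. \<phi> x = Red"
    and st: "is_stage m As" and len: "length As < m - 1" and gd: "good m \<phi> As"
  shows "\<exists>A. is_stage m (As @ [A]) \<and> good m \<phi> (As @ [A])"
proof -
  define j where "j = length As"
  define n where "n = m ^ (m - j - 1)"
  have sz: "m ^ (m - j) = m * n"
  proof -
    have "m - j = Suc (m - j - 1)" using len j_def by linarith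
    then show ?thesis unfolding n_def by (metis power_Suc)
  qed
  have blocks: "\<forall>k<n. \<exists>t<m. \<phi> (As, k*m+t) = Red"
  proof (intro allI impI)
    fix k assume k: "k < n"
    have "k*m + m = (k+1)*m" by simp
    also have "\<dots> \<le> n*m" using k by (intro mult_right_mono) auto
    finally have le: "k*m + m \<le> m ^ (m - length As)" using sz j_def by (simp add: mult.commute)
    have "{(As, k*m + t) | t. t < m} \<in> stage_edges m"
      unfolding stage_edges_def using st le by blast
    then obtain x where "x \<in> {(As, k*m + t) | t. t < m}" "\<phi> x = Red" using poly by blast
    then show "\<exists>t<m. \<phi> (As, k*m+t) = Red" by blast
  qed
  define R where "R = {i. i < m*n \<and> \<phi> (As, i) = Red}"
  have "n \<le> card R" unfolding R_def by (rule count_blocks[OF blocks])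
  then obtain A where A: "A \<subseteq> R" "card A = n" "finite A" by (rule obtain_subset_with_card_n)
  have st2: "is_stage m (As @ [A])"
    unfolding is_stage_def
  proof (rule conjI)
    show "length (As @ [A]) \<le> m - 1" using len by simp
  next
    show "\<forall>k<length (As @ [A]). (As @ [A]) ! k \<subseteq> {..<m ^ (m - k)} \<and> card ((As @ [A]) ! k) = m ^ (m - k - 1)"
  proof (intro allI impI)
    fix k assume k: "k < length (As @ [A])"
    show "(As @ [A]) ! k \<subseteq> {..<m ^ (m - k)} \<and> card ((As @ [A]) ! k) = m ^ (m - k - 1)"
    proof (cases "k < length As")
      case True
      then show ?thesis using st unfolding is_stage_def by (simp add: nth_append)
    next
      case False
      then have "k = j" using k j_def by simp
      then have kA: "(As @ [A]) ! k = A" using j_def by simp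
      have "A \<subseteq> {..<m ^ (m - k)}" using A(1) \<open>k = j\<close> sz unfolding R_def by auto
      moreover have "card A = m ^ (m - k - 1)" using A(2) \<open>k = j\<close> n_def by simp
      ultimately show ?thesis using kA by simp
    qed
  qed
  qed
  have gd2: "good m \<phi> (As @ [A])"
    unfolding good_def
  proof (intro allI impI)
    fix i k assume i: "i < m ^ (m - length (As @ [A]))" and k: "1 \<le> k \<and> k \<le> length (As @ [A])"
    have e: "m - length (As @ [A]) = m - j - 1" using j_def by simp
    have "i < n" using i unfolding n_def e .
    then have ilt: "i < card A" using A(2) by simp
    define a where "a = sorted_list_of_set A ! i"
    have aA: "a \<in> A" unfolding a_def using ilt A(3)
      by (metis nth_mem length_sorted_list_of_set set_sorted_list_of_set)
    then have aR: "a < m*n" "\<phi> (As, a) = Red" using A unfolding R_def by auto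
    have par: "parent (As @ [A], i) = (As, a)" unfolding parent_def a_def by simp
    obtain k' where k': "k = Suc k'" using k by (cases k) auto
    have "(parent ^^ k) (As @ [A], i) = (parent ^^ k') (As, a)"
      using par k' by (simp add: funpow_Suc_right del: funpow.simps)
    moreover have "\<phi> ((parent ^^ k') (As, a)) = Red"
    proof (cases k')
      case 0 then show ?thesis using aR by simp
    next
      case (Suc k'')
      have alt: "a < m ^ (m - length As)" using aR sz j_def by simp
      have H: "\<forall>k. 1 \<le> k \<and> k \<le> length As \<longrightarrow> \<phi> ((parent ^^ k) (As, a)) = Red"
        using gd alt unfolding good_def by blast
      have "1 \<le> k' \<and> k' \<le> length As" using k k' Suc by simp
      then show ?thesis using H by blast
    qed
    ultimately show "\<phi> ((parent ^^ k) (As @ [A], i)) = Red" by simp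
  qed
  show ?thesis using st2 gd2 by blast
qed

lemma exists_stage:
  assumes m: "m \<ge> 1"
    and poly: "\<forall>e\<in>stage_edges m. \<exists>x\<in>e. \<phi> x = Red"
  shows "j \<le> m - 1 \<Longrightarrow> \<exists>As. is_stage m As \<and> length As = j \<and> good m \<phi> As"
proof (induction j)
  case 0
  have "is_stage m []" unfolding is_stage_def by simp
  moreover have "good m \<phi> []" unfolding good_def by simp
  ultimately show ?case by auto
next
  case (Suc j)
  then obtain As where As: "is_stage m As" "length As = j" "good m \<phi> As" by auto
  then obtain A where "is_stage m (As @ [A]) \<and> good m \<phi> (As @ [A])"
    using step[OF m poly As(1) _ As(3)] Suc.prems by auto
  then show ?case using As by auto
qed

theorem theorem9:
  fixes m :: nat
  assumes "m \<ge> 1"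
  shows "\<not> (\<exists>\<phi> :: vertex \<Rightarrow> color. polychromatic m \<phi>)"
proof
  assume "\<exists>\<phi> :: vertex \<Rightarrow> color. polychromatic m \<phi>"
  then obtain \<phi> where p: "polychromatic m \<phi>" by blast
  have poly: "\<forall>e\<in>stage_edges m. \<exists>x\<in>e. \<phi> x = Red"
    using p unfolding polychromatic_def hyperedges_def by blast
  obtain As where As: "is_stage m As" "length As = m - 1" "good m \<phi> As"
    using exists_stage[OF assms poly, of "m - 1"] by auto
  have ml: "m - length As = 1" using As(2) assms by simp
  have msz: "m ^ (m - length As) = m" unfolding ml by simp
  have c: "is_stage m As \<and> 0 + m \<le> m ^ (m - length As)" using As(1) msz by simp
  have "{(As, 0 + t) | t. t < m} \<in> stage_edges m"
    unfolding stage_edges_def using c by blast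
  then obtain x where "x \<in> {(As, 0 + t) | t. t < m}" "\<phi> x = Red" using poly by blast
  then obtain i where i: "i < m" "\<phi> (As, i) = Red" by auto
  define v where "v = (As, i)"
  have vv: "v \<in> vertices m" "level v = m - 1"
    unfolding v_def vertices_def level_def using As(1,2) i msz by auto
  have ilt: "i < m ^ (m - length As)" using i msz by simp
  have H: "\<forall>k. 1 \<le> k \<and> k \<le> length As \<longrightarrow> \<phi> ((parent ^^ k) (As, i)) = Red"
    using As(3) ilt unfolding good_def by blast
  have allred: "\<forall>k \<le> m - 1. \<phi> ((parent ^^ k) v) = Red"
  proof (intro allI impI)
    fix k assume k: "k \<le> m - 1"
    show "\<phi> ((parent ^^ k) v) = Red"
    proof (cases k)
      case 0 then show ?thesis using i v_def by simp
    next
      case (Suc k1)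
      then have "1 \<le> k \<and> k \<le> length As" using k As(2) by simp
      then show ?thesis using H v_def by blast
    qed
  qed
  have "{(parent ^^ k) v | k. k \<le> m - 1} \<in> path_edges m"
    unfolding path_edges_def using vv by blast
  then have "\<exists>x \<in> {(parent ^^ k) v | k. k \<le> m - 1}. \<phi> x = Blue"
    using p unfolding polychromatic_def hyperedges_def by blast
  then show False using allred by auto
qed

end
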